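(* Let $H=(V,E)$ be a capacitated hypergraph, let $v_1,\ldots,v_n$ be a tight ordering for $H$, and let $G=(V,E')$ be the corresponding tight graph. Then for all $1\le i<j\le n$, $d'(V_i,v_j;G)=d'(V_i,v_j;H)$.
   Context: A hypergraph $H=(V,E)$ has finite vertex set $V$, a finite multiset $E$ of edges (subsets of $V$), and capacities $c:E\to\mathbb{R}_{\ge0}$. For disjoint $A,B\subseteq V$, $d'(A,B;H)$ is the total capacity of edges $e$ with $e\cap A\ne\emptyset$, $e\cap B\ne\emptyset$ and $e\subseteq A\cup B$ (a vertex $v$ stands for $\{v\}$). For an ordering $v_1,\ldots,v_n$, $V_i=\{v_1,\ldots,v_i\}$ ($V_0=\emptyset$); it is a tight ordering if $d'(V_{i-1},v_i;H)\ge d'(V_{i-1},v_j;H)$ for all $1\le i<j\le n$. The tight graph $G=(V,E')$ with respect to $H$ and this ordering has, for each $e\in E$, an edge $e'$ of capacity $c(e)$ consisting of the last two vertices of $e$ in the ordering (the last $\min(2,|e|)$ vertices). *)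

theory Defs
  imports Main "HOL.Real"
begin

text \<open>A capacitated hypergraph (V, E, c): the finite multiset E of edges is represented
by a finite index set I together with an edge map edge :: 'i => 'a set and capacities
cap :: 'i => real (parallel edges = distinct indices with equal edge sets).\<close>

definition hypergraph :: "'a set \<Rightarrow> 'i set \<Rightarrow> ('i \<Rightarrow> 'a set) \<Rightarrow> ('i \<Rightarrow> real) \<Rightarrow> bool" where
  "hypergraph V I edge cap \<longleftrightarrow> finite V \<and> finite I \<and>
     (\<forall>i\<in>I. edge i \<subseteq> V) \<and> (\<forall>i\<in>I. cap i \<ge> 0)"

definition dprime :: "'i set \<Rightarrow> ('i \<Rightarrow> 'a set) \<Rightarrow> ('i \<Rightarrow> real) \<Rightarrow> 'a set \<Rightarrow> 'a set \<Rightarrow> real" where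
  "dprime I edge cap A B =
     (\<Sum>i\<in>{i\<in>I. edge i \<inter> A \<noteq> {} \<and> edge i \<inter> B \<noteq> {} \<and> edge i \<subseteq> A \<union> B}. cap i)"

text \<open>An ordering v_1,...,v_n of V is a distinct list vs with set vs = V;
  v_i = vs ! (i - 1) and V_i = set (take i vs).\<close>
definition ordering_of :: "'a set \<Rightarrow> 'a list \<Rightarrow> bool" where
  "ordering_of V vs \<longleftrightarrow> distinct vs \<and> set vs = V"

definition tight_ordering :: "'a set \<Rightarrow> 'i set \<Rightarrow> ('i \<Rightarrow> 'a set) \<Rightarrow> ('i \<Rightarrow> real) \<Rightarrow> 'a list \<Rightarrow> bool" where
  "tight_ordering V I edge cap vs \<longleftrightarrow> ordering_of V vs \<and>
     (\<forall>i j. 1 \<le> i \<and> i < j \<and> j \<le> length vs \<longrightarrow>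
        dprime I edge cap (set (take (i - 1) vs)) {vs ! (i - 1)}
          \<ge> dprime I edge cap (set (take (i - 1) vs)) {vs ! (j - 1)})"

definition tight_edge :: "'a list \<Rightarrow> 'a set \<Rightarrow> 'a set" where
  "tight_edge vs e = set (take 2 (rev (filter (\<lambda>v. v \<in> e) vs)))"

end

theory Submission
  imports Defs
begin

lemma core:
  assumes d: "distinct (as @ zs @ v # ys)" and sub: "e \<subseteq> set (as @ zs @ v # ys)"
  defines "T \<equiv> set (take 2 (rev (filter (\<lambda>x. x\<in>e) (as @ zs @ v # ys))))"
  shows "(T \<inter> set as \<noteq> {} \<and> T \<inter> {v} \<noteq> {} \<and> T \<subseteq> set as \<union> {v})
     \<longleftrightarrow> (e \<inter> set as \<noteq> {} \<and> e \<inter> {v} \<noteq> {} \<and> e \<subseteq> set as \<union> {v})"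
proof
  have Te: "T \<subseteq> e" unfolding T_def by (auto dest: in_set_takeD)
  assume H: "T \<inter> set as \<noteq> {} \<and> T \<inter> {v} \<noteq> {} \<and> T \<subseteq> set as \<union> {v}"
  hence ve: "v \<in> e" using Te by auto
  have fy: "filter (\<lambda>x. x\<in>e) ys = []"
  proof (rule ccontr)
    assume ne: "filter (\<lambda>x. x\<in>e) ys \<noteq> []"
    then obtain w r where r: "rev (filter (\<lambda>x. x\<in>e) ys) = w # r"
      by (cases "rev (filter (\<lambda>x. x\<in>e) ys)") auto
    hence "w \<in> set ys" by (metis list.set_intros(1) set_filter set_rev mem_Collect_eq)
    moreover have "w \<in> T" unfolding T_def using r by simp
    ultimately show False using H d by auto
  qed
  have fz: "filter (\<lambda>x. x\<in>e) zs = []"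
  proof (rule ccontr)
    assume ne: "filter (\<lambda>x. x\<in>e) zs \<noteq> []"
    then obtain w r where r: "rev (filter (\<lambda>x. x\<in>e) zs) = w # r"
      by (cases "rev (filter (\<lambda>x. x\<in>e) zs)") auto
    hence "w \<in> set zs" by (metis list.set_intros(1) set_filter set_rev mem_Collect_eq)
    moreover have "w \<in> T" unfolding T_def using r fy ve by simp
    ultimately show False using H d by auto
  qed
  have "e \<subseteq> set as \<union> {v}"
  proof
    fix x assume "x \<in> e"
    with sub fy fz show "x \<in> set as \<union> {v}"
      by (auto simp: filter_empty_conv)
  qed
  with H Te show "e \<inter> set as \<noteq> {} \<and> e \<inter> {v} \<noteq> {} \<and> e \<subseteq> set as \<union> {v}" by auto
next
  assume H: "e \<inter> set as \<noteq> {} \<and> e \<inter> {v} \<noteq> {} \<and> e \<subseteq> set as \<union> {v}"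
  hence ve: "v \<in> e" by auto
  have fy: "filter (\<lambda>x. x\<in>e) ys = []" using H d by (auto simp: filter_empty_conv)
  have fz: "filter (\<lambda>x. x\<in>e) zs = []" using H d by (auto simp: filter_empty_conv)
  have fa: "filter (\<lambda>x. x\<in>e) as \<noteq> []" using H by (auto simp: filter_empty_conv)
  then obtain u r where r: "rev (filter (\<lambda>x. x\<in>e) as) = u # r"
    by (cases "rev (filter (\<lambda>x. x\<in>e) as)") auto
  hence u: "u \<in> set as" "u \<in> e" by (metis list.set_intros(1) set_filter set_rev mem_Collect_eq)+
  have "T = {v, u}" unfolding T_def using r fy fz ve by simp
  with u H show "T \<inter> set as \<noteq> {} \<and> T \<inter> {v} \<noteq> {} \<and> T \<subseteq> set as \<union> {v}" by auto
qed

theorem mainTheorem17: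
  fixes V :: "'a set" and I :: "'i set" and edge :: "'i \<Rightarrow> 'a set"
    and cap :: "'i \<Rightarrow> real" and vs :: "'a list"
  assumes "hypergraph V I edge cap"
    and "tight_ordering V I edge cap vs"
  shows "\<forall>i j. 1 \<le> i \<and> i < j \<and> j \<le> length vs \<longrightarrow>
           dprime I (\<lambda>k. tight_edge vs (edge k)) cap (set (take i vs)) {vs ! (j - 1)}
             = dprime I edge cap (set (take i vs)) {vs ! (j - 1)}"
proof (intro allI impI)
  fix i j assume ij: "1 \<le> i \<and> i < j \<and> j \<le> length vs"
  have dv: "distinct vs" and sv: "set vs = V" using assms(2)
    by (auto simp: tight_ordering_def ordering_of_def)
  have es: "\<forall>k\<in>I. edge k \<subseteq> set vs" using assms(1) sv by (auto simp: hypergraph_def)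
  define as where "as = take i vs"
  define zs where "zs = take (j - 1 - i) (drop i vs)"
  define v where "v = vs ! (j - 1)"
  define ys where "ys = drop j vs"
  have "vs = take (j - 1) vs @ vs ! (j - 1) # drop (Suc (j - 1)) vs"
  proof -
    have "j - 1 < length vs" using ij by linarith
    from id_take_nth_drop[OF this] show ?thesis using ij by (simp add: Suc_diff_1)
  qed
  moreover have "take (j - 1) vs = as @ zs"
    unfolding as_def zs_def using ij by (metis le_add_diff_inverse less_Suc_eq_le less_imp_le_nat Suc_diff_1 take_add le_less_trans zero_less_one)
  ultimately have dec: "vs = as @ zs @ v # ys" unfolding v_def ys_def using ij by simp
  have "{k\<in>I. tight_edge vs (edge k) \<inter> set as \<noteq> {} \<and> tight_edge vs (edge k) \<inter> {v} \<noteq> {}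
          \<and> tight_edge vs (edge k) \<subseteq> set as \<union> {v}}
      = {k\<in>I. edge k \<inter> set as \<noteq> {} \<and> edge k \<inter> {v} \<noteq> {} \<and> edge k \<subseteq> set as \<union> {v}}"
  proof (rule Collect_cong)
    fix k
    show "(k \<in> I \<and> tight_edge vs (edge k) \<inter> set as \<noteq> {} \<and> tight_edge vs (edge k) \<inter> {v} \<noteq> {}
          \<and> tight_edge vs (edge k) \<subseteq> set as \<union> {v}) =
          (k \<in> I \<and> edge k \<inter> set as \<noteq> {} \<and> edge k \<inter> {v} \<noteq> {} \<and> edge k \<subseteq> set as \<union> {v})"
    proof (cases "k \<in> I")
      case True
      hence "edge k \<subseteq> set (as @ zs @ v # ys)" using es dec by metis
      moreover have "distinct (as @ zs @ v # ys)" using dv dec by metis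
      ultimately show ?thesis
        using core[of as zs v ys "edge k"] True unfolding tight_edge_def using dec by metis
    qed simp
  qed
  thus "dprime I (\<lambda>k. tight_edge vs (edge k)) cap (set (take i vs)) {vs ! (j - 1)}
             = dprime I edge cap (set (take i vs)) {vs ! (j - 1)}"
    unfolding dprime_def as_def v_def by simp
qed

end
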